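(* Let $\Phi$ be a (possibly infinite) NCIFS on $X\subset\mathbb R^d$ with bounded distortion constant $K$, and let $t\in[0,d]$. Assume that $\sum_{j\in I^{(n)}}\|D\phi^{(n)}_j\|^t<\infty$ for all $n$. Let $\delta>0$, and for each $n$ let $I^{(n)}_f\subset I^{(n)}$ be a finite set such that \[\sum_{j\in I^{(n)}}\|D\phi^{(n)}_j\|^t\le(1+\delta)\sum_{j\in I^{(n)}_f}\|D\phi^{(n)}_j\|^t\] for all sufficiently large $n$. Let $\Phi_f$ be the system with $\Phi_f^{(n)}=(\phi^{(n)}_j)_{j\in I^{(n)}_f}$. Then $\underline P^{\Phi_f}(t)\ge\underline P^{\Phi}(t)-\delta K^{2d}$.
   Context: Fix $d\in\mathbb N$ and a compact set $X\subset\mathbb R^d$ equal to the closure of its interior, such that $\partial X$ is smooth or $X$ is convex. $\|D\phi\|:=\sup_{x\in X}|\phi'(x)|$ for a conformal map $\phi$. An NCIFS $\Phi$ on $X$ is a sequence $\Phi^{(j)}=(\phi^{(j)}_i:X\to X)_{i\in I^{(j)}}$, $j\ge1$, of families indexed by finite or countably infinite sets, satisfying: - (open set condition) images of $\operatorname{int}X$ under distinct maps of the same $\Phi^{(j)}$ are disjoint; - (conformality) there is an open connected $V\supset X$ such that all maps extend to $C^1$ conformal diffeomorphisms of $V$ into $V$; - (bounded distortion) there is $K\ge1$ with $|\phi'(x)|\le K|\phi'(y)|$ for $x,y\in V$ and every composition $\phi=\phi^{(k)}_{\omega_k}\circ\cdots\circ\phi^{(l)}_{\omega_l}$, $k\le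 l$, $\omega_j\in I^{(j)}$; - (uniform contraction) $\|D\phi^{(j)}_i\|\le\eta<1$ for all $i,j$. For $\omega\in I^n=\prod_{j\le n}I^{(j)}$ let $\phi_\omega=\phi^{(1)}_{\omega_1}\circ\cdots\circ\phi^{(n)}_{\omega_n}$. For a system $\Psi$ of this kind, $Z^\Psi_n(t)=\sum_{\omega\in I^n}\|D\phi_\omega\|^t$ (computed with the index sets of $\Psi$), and the lower pressure is $\underline P^\Psi(t)=\liminf_{n\to\infty}\frac1n\log Z^\Psi_n(t)$. *)

theory Defs
  imports "HOL-Analysis.Analysis"
begin

definition dnorm :: "('a::euclidean_space \<Rightarrow> 'a) \<Rightarrow> 'a \<Rightarrow> real" where
  "dnorm f x = onorm (frechet_derivative f (at x))"

definition Dnorm :: "'a::euclidean_space set \<Rightarrow> ('a \<Rightarrow> 'a) \<Rightarrow> real" where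
  "Dnorm X f = (SUP x\<in>X. dnorm f x)"

text \<open>C-infinity real functions on an open set: continuous, differentiable, and all
  directional derivatives again smooth.\<close>
coinductive smooth_on :: "'a::euclidean_space set \<Rightarrow> ('a \<Rightarrow> real) \<Rightarrow> bool" for U where
  "continuous_on U g \<Longrightarrow> (\<forall>x\<in>U. g differentiable at x) \<Longrightarrow>
   (\<forall>v. smooth_on U (\<lambda>x. frechet_derivative g (at x) v)) \<Longrightarrow> smooth_on U g"

definition smooth_boundary :: "'a::euclidean_space set \<Rightarrow> bool" where
  "smooth_boundary X \<longleftrightarrow>
     (\<forall>p\<in>frontier X. \<exists>U g. open U \<and> p \<in> U \<and> smooth_on U g \<and>
        frechet_derivative g (at p) \<noteq> (\<lambda>v. 0) \<and> X \<inter> U = {x\<in>U. g x \<le> 0})"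

definition conformal_C1_diffeo :: "'a::euclidean_space set \<Rightarrow> ('a \<Rightarrow> 'a) \<Rightarrow> bool" where
  "conformal_C1_diffeo V f \<longleftrightarrow>
     inj_on f V \<and> f ` V \<subseteq> V \<and> open (f ` V) \<and>
     (\<forall>x\<in>V. f differentiable at x) \<and>
     (\<forall>v. continuous_on V (\<lambda>x. frechet_derivative f (at x) v)) \<and>
     (\<forall>x\<in>V. \<exists>c>0. \<forall>v. norm (frechet_derivative f (at x) v) = c * norm v) \<and>
     (\<exists>g. (\<forall>x\<in>V. g (f x) = x) \<and> (\<forall>y\<in>f ` V. g differentiable at y))"

fun cs :: "(nat \<Rightarrow> nat \<Rightarrow> 'a \<Rightarrow> 'a) \<Rightarrow> (nat \<Rightarrow> nat) \<Rightarrow> nat \<Rightarrow> nat \<Rightarrow> 'a \<Rightarrow> 'a" where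
  "cs \<phi> \<omega> k 0 = id"
| "cs \<phi> \<omega> k (Suc m) = \<phi> k (\<omega> k) \<circ> cs \<phi> \<omega> (Suc k) m"

definition words :: "(nat \<Rightarrow> nat set) \<Rightarrow> nat \<Rightarrow> (nat \<Rightarrow> nat) set" where
  "words I n = Pi\<^sub>E {1..n} I"

definition NCIFS :: "'a::euclidean_space set \<Rightarrow> (nat \<Rightarrow> nat set) \<Rightarrow> (nat \<Rightarrow> nat \<Rightarrow> 'a \<Rightarrow> 'a) \<Rightarrow> real \<Rightarrow> bool" where
  "NCIFS X I \<phi> K \<longleftrightarrow>
     compact X \<and> X \<noteq> {} \<and> X = closure (interior X) \<and> (convex X \<or> smooth_boundary X) \<and>
     (\<forall>j\<ge>1. I j \<noteq> {}) \<and>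
     (\<forall>j\<ge>1. \<forall>i\<in>I j. \<phi> j i ` X \<subseteq> X) \<and>
     (\<forall>j\<ge>1. \<forall>i\<in>I j. \<forall>i'\<in>I j. i \<noteq> i' \<longrightarrow> \<phi> j i ` interior X \<inter> \<phi> j i' ` interior X = {}) \<and>
     (\<exists>V. open V \<and> connected V \<and> X \<subseteq> V \<and>
        (\<forall>j\<ge>1. \<forall>i\<in>I j. conformal_C1_diffeo V (\<phi> j i)) \<and>
        K \<ge> 1 \<and>
        (\<forall>\<omega> k m x y. 1 \<le> k \<longrightarrow> 1 \<le> m \<longrightarrow> (\<forall>l\<in>{k..<k+m}. \<omega> l \<in> I l) \<longrightarrow>
            x \<in> V \<longrightarrow> y \<in> V \<longrightarrow> dnorm (cs \<phi> \<omega> k m) x \<le> K * dnorm (cs \<phi> \<omega> k m) y)) \<and>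
     (\<exists>\<eta><1. \<forall>j\<ge>1. \<forall>i\<in>I j. Dnorm X (\<phi> j i) \<le> \<eta>)"

definition Zn :: "'a::euclidean_space set \<Rightarrow> (nat \<Rightarrow> nat set) \<Rightarrow> (nat \<Rightarrow> nat \<Rightarrow> 'a \<Rightarrow> 'a) \<Rightarrow> real \<Rightarrow> nat \<Rightarrow> ennreal" where
  "Zn X I \<phi> t n = (\<Sum>\<^sub>\<infinity>\<omega>\<in>words I n. ennreal (Dnorm X (cs \<phi> \<omega> 1 n) powr t))"

definition eln :: "ennreal \<Rightarrow> ereal" where
  "eln z = (if z = 0 then -\<infinity> else if z = \<infinity> then \<infinity> else ereal (ln (enn2real z)))"

definition lower_pressure :: "'a::euclidean_space set \<Rightarrow> (nat \<Rightarrow> nat set) \<Rightarrow> (nat \<Rightarrow> nat \<Rightarrow> 'a \<Rightarrow> 'a) \<Rightarrow> real \<Rightarrow> ereal" where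
  "lower_pressure X I \<phi> t = liminf (\<lambda>n. eln (Zn X I \<phi> t n) / ereal (real n))"

end

theory Submission
  imports Defs
begin


definition confat :: "('a::euclidean_space \<Rightarrow> 'a) \<Rightarrow> 'a \<Rightarrow> real \<Rightarrow> bool" where
  "confat f x c \<longleftrightarrow> f differentiable at x \<and> (\<forall>v. norm (frechet_derivative f (at x) v) = c * norm v)"

lemma confat_comp:
  assumes "confat g x c1" "confat f (g x) c2"
  shows "confat (f \<circ> g) x (c2 * c1)"
  using assms unfolding confat_def
  by (simp add: differentiable_chain_at frechet_derivative_compose mult.assoc)

lemma confat_dnorm:
  assumes "confat f x c"
  shows "dnorm f x = c"
proof -
  let ?L = "frechet_derivative f (at x)"
  have d: "f differentiable at x" and n: "\<And>v. norm (?L v) = c * norm v"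
    using assms unfolding confat_def by auto
  have bl: "bounded_linear ?L"
    using d frechet_derivative_works has_derivative_bounded_linear by blast
  obtain b :: 'a where b: "b \<in> Basis" using nonempty_Basis by blast
  have nb: "norm b = 1" using b by simp
  have c0: "c \<ge> 0" using n[of b] nb by (metis mult.right_neutral norm_ge_zero)
  have "onorm ?L \<le> c" by (rule onorm_le) (simp add: n)
  moreover have "c \<le> onorm ?L" using onorm[OF bl, of b] n[of b] nb by simp
  ultimately show ?thesis unfolding dnorm_def by simp
qed

lemma confat_id: "confat id x 1"
  unfolding confat_def by (simp add: id_def)

lemma cs_add: "cs \<phi> \<omega> k (a + b) = cs \<phi> \<omega> k a \<circ> cs \<phi> \<omega> (k + a) b"
  by (induction a arbitrary: k) (auto simp: o_assoc)

lemma cs_cong: "(\<And>l. k \<le> l \<Longrightarrow> l < k + m \<Longrightarrow> \<omega> l = \<omega>' l) \<Longrightarrow> cs \<phi> \<omega> k m = cs \<phi> \<omega>' k m"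
  by (induction m arbitrary: k) auto

lemma cs_one [simp]: "cs \<phi> \<omega> k (Suc 0) = \<phi> k (\<omega> k)" "cs \<phi> \<omega> k 1 = \<phi> k (\<omega> k)"
  by (simp_all add: One_nat_def)

lemma dnorm_comp:
  assumes "confat g x c1" "confat f (g x) c2"
  shows "dnorm (f \<circ> g) x = dnorm f (g x) * dnorm g x"
  using confat_dnorm[OF confat_comp[OF assms]] confat_dnorm[OF assms(1)] confat_dnorm[OF assms(2)]
  by simp

locale ncifs_data =
  fixes X V :: "'a::euclidean_space set" and I :: "nat \<Rightarrow> nat set"
    and \<phi> :: "nat \<Rightarrow> nat \<Rightarrow> 'a \<Rightarrow> 'a" and K :: real
  assumes XV: "X \<subseteq> V" and Xne: "X \<noteq> {}"
    and mapsX: "\<And>j i. 1 \<le> j \<Longrightarrow> i \<in> I j \<Longrightarrow> \<phi> j i ` X \<subseteq> X"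
    and conf: "\<And>j i. 1 \<le> j \<Longrightarrow> i \<in> I j \<Longrightarrow> conformal_C1_diffeo V (\<phi> j i)"
    and K1: "K \<ge> 1"
    and dist: "\<And>\<omega> k m x y. 1 \<le> k \<Longrightarrow> 1 \<le> m \<Longrightarrow> (\<forall>l\<in>{k..<k+m}. \<omega> l \<in> I l) \<Longrightarrow>
            x \<in> V \<Longrightarrow> y \<in> V \<Longrightarrow> dnorm (cs \<phi> \<omega> k m) x \<le> K * dnorm (cs \<phi> \<omega> k m) y"
begin

lemma cs_V:
  assumes "1 \<le> k" "\<forall>l\<in>{k..<k+m}. \<omega> l \<in> I l" "x \<in> V"
  shows "cs \<phi> \<omega> k m x \<in> V \<and> (\<exists>c>0. confat (cs \<phi> \<omega> k m) x c)"
  using assms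
proof (induction m arbitrary: k x)
  case 0
  then show ?case using confat_id[of x] by (auto simp: id_def intro!: exI[of _ 1])
next
  case (Suc m)
  have l: "\<forall>l\<in>{Suc k..<Suc k+m}. \<omega> l \<in> I l" using Suc.prems(2) by auto
  from Suc.IH[OF _ l Suc.prems(3)] obtain c where
    yV: "cs \<phi> \<omega> (Suc k) m x \<in> V" and c: "c > 0" "confat (cs \<phi> \<omega> (Suc k) m) x c" by auto
  let ?y = "cs \<phi> \<omega> (Suc k) m x"
  have wk: "\<omega> k \<in> I k" using Suc.prems(2) by auto
  have cd: "conformal_C1_diffeo V (\<phi> k (\<omega> k))" using conf[OF Suc.prems(1) wk] .
  then have yv: "\<phi> k (\<omega> k) ?y \<in> V" using yV unfolding conformal_C1_diffeo_def by auto
  obtain c' where c': "c' > 0" "confat (\<phi> k (\<omega> k)) ?y c'"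
    using cd yV unfolding conformal_C1_diffeo_def confat_def by blast
  have cc: "confat (cs \<phi> \<omega> k (Suc m)) x (c' * c)"
    using confat_comp[OF c(2) c'(2)] by (simp only: cs.simps)
  show ?case
  proof (intro conjI exI[of _ "c' * c"])
    show "cs \<phi> \<omega> k (Suc m) x \<in> V" using yv by simp
    show "c' * c > 0" using c(1) c'(1) by simp
  qed (rule cc)
qed

lemma cs_X:
  assumes "1 \<le> k" "\<forall>l\<in>{k..<k+m}. \<omega> l \<in> I l" "x \<in> X"
  shows "cs \<phi> \<omega> k m x \<in> X"
  using assms
proof (induction m arbitrary: k x)
  case 0
  then show ?case by auto
next
  case (Suc m)
  have l: "\<forall>l\<in>{Suc k..<Suc k+m}. \<omega> l \<in> I l" using Suc.prems(2) by auto
  have wk: "\<omega> k \<in> I k" using Suc.prems(2) by auto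
  from Suc.IH[OF _ l Suc.prems(3)] mapsX[OF Suc.prems(1) wk] show ?case by auto
qed

lemma dnorm_pos:
  assumes "1 \<le> k" "\<forall>l\<in>{k..<k+m}. \<omega> l \<in> I l" "x \<in> V"
  shows "dnorm (cs \<phi> \<omega> k m) x > 0"
  using cs_V[OF assms] confat_dnorm by auto

lemma dist0:
  assumes "1 \<le> k" "\<forall>l\<in>{k..<k+m}. \<omega> l \<in> I l" "x \<in> V" "y \<in> V"
  shows "dnorm (cs \<phi> \<omega> k m) x \<le> K * dnorm (cs \<phi> \<omega> k m) y"
proof (cases "m = 0")
  case True
  have "dnorm id x = 1" "dnorm id y = 1" by (rule confat_dnorm[OF confat_id])+
  then show ?thesis using True K1 by simp
next
  case False
  then show ?thesis using dist[of k m \<omega> x y] assms by auto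
qed

lemma bdd:
  assumes "1 \<le> k" "\<forall>l\<in>{k..<k+m}. \<omega> l \<in> I l"
  shows "bdd_above ((\<lambda>x. dnorm (cs \<phi> \<omega> k m) x) ` X)"
proof -
  obtain y where y: "y \<in> X" using Xne by auto
  show ?thesis
    by (rule bdd_aboveI[of _ "K * dnorm (cs \<phi> \<omega> k m) y"])
       (use dist0[OF assms] y XV in auto)
qed

lemma dnorm_le_Dnorm:
  assumes "1 \<le> k" "\<forall>l\<in>{k..<k+m}. \<omega> l \<in> I l" "x \<in> X"
  shows "dnorm (cs \<phi> \<omega> k m) x \<le> Dnorm X (cs \<phi> \<omega> k m)"
  unfolding Dnorm_def by (rule cSUP_upper[OF assms(3) bdd[OF assms(1,2)]])

lemma Dnorm_le_K:
  assumes "1 \<le> k" "\<forall>l\<in>{k..<k+m}. \<omega> l \<in> I l" "y \<in> V"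
  shows "Dnorm X (cs \<phi> \<omega> k m) \<le> K * dnorm (cs \<phi> \<omega> k m) y"
  unfolding Dnorm_def using Xne dist0[OF assms(1,2) _ assms(3)] XV
  by (intro cSUP_least) auto

lemma Dnorm_pos:
  assumes "1 \<le> k" "\<forall>l\<in>{k..<k+m}. \<omega> l \<in> I l"
  shows "Dnorm X (cs \<phi> \<omega> k m) > 0"
proof -
  obtain y where y: "y \<in> X" using Xne by auto
  show ?thesis using dnorm_le_Dnorm[OF assms y] dnorm_pos[OF assms] y XV by force
qed

lemma s_conf:
  assumes "1 \<le> k" "i \<in> I k" "x \<in> V"
  shows "\<phi> k i x \<in> V \<and> (\<exists>c>0. confat (\<phi> k i) x c)"
  using cs_V[of k 1 "\<lambda>_. i" x] assms by simp

lemma s_dnorm_le_Dnorm: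
  assumes "1 \<le> k" "i \<in> I k" "x \<in> X"
  shows "dnorm (\<phi> k i) x \<le> Dnorm X (\<phi> k i)"
  using dnorm_le_Dnorm[of k 1 "\<lambda>_. i" x] assms by simp

lemma s_Dnorm_le_K:
  assumes "1 \<le> k" "i \<in> I k" "y \<in> V"
  shows "Dnorm X (\<phi> k i) \<le> K * dnorm (\<phi> k i) y"
  using Dnorm_le_K[of k 1 "\<lambda>_. i" y] assms by simp

lemma s_Dnorm_pos:
  assumes "1 \<le> k" "i \<in> I k"
  shows "Dnorm X (\<phi> k i) > 0"
  using Dnorm_pos[of k 1 "\<lambda>_. i"] assms by simp

lemma s_dnorm_pos:
  assumes "1 \<le> k" "i \<in> I k" "x \<in> V"
  shows "dnorm (\<phi> k i) x > 0"
  using dnorm_pos[of k 1 "\<lambda>_. i" x] assms by simp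

lemma key:
  assumes kn: "k \<in> {1..n}" and w: "\<forall>l\<in>{1..n}. \<omega> l \<in> I l" and i': "i' \<in> I k"
  shows "Dnorm X (cs \<phi> \<omega> 1 n) * Dnorm X (\<phi> k i')
     \<le> K^2 * Dnorm X (\<phi> k (\<omega> k)) * Dnorm X (cs \<phi> (fun_upd \<omega> k i') 1 n)"
proof -
  define \<omega>' where "\<omega>' = fun_upd \<omega> k i'"
  define \<alpha> where "\<alpha> = cs \<phi> \<omega> 1 (k-1)"
  define \<beta> where "\<beta> = cs \<phi> \<omega> (Suc k) (n-k)"
  let ?p = "\<phi> k (\<omega> k)"
  let ?p' = "\<phi> k i'"
  have k1: "1 \<le> k" and kn': "k \<le> n" using kn by auto
  have wk: "\<omega> k \<in> I k" using w kn by auto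
  have nsplit: "n = (k-1) + Suc (n-k)" using kn by auto
  have e1: "cs \<phi> \<omega> 1 n = \<alpha> \<circ> (?p \<circ> \<beta>)"
  proof -
    have "cs \<phi> \<omega> 1 n = cs \<phi> \<omega> 1 (k-1) \<circ> cs \<phi> \<omega> (1 + (k-1)) (Suc (n-k))"
      by (subst nsplit) (rule cs_add)
    then show ?thesis using k1 unfolding \<alpha>_def \<beta>_def by simp
  qed
  have a': "cs \<phi> \<omega>' 1 (k-1) = \<alpha>" unfolding \<alpha>_def \<omega>'_def by (rule cs_cong) auto
  have b': "cs \<phi> \<omega>' (Suc k) (n-k) = \<beta>" unfolding \<beta>_def \<omega>'_def by (rule cs_cong) auto
  have e2: "cs \<phi> \<omega>' 1 n = \<alpha> \<circ> (?p' \<circ> \<beta>)"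
  proof -
    have "cs \<phi> \<omega>' 1 n = cs \<phi> \<omega>' 1 (k-1) \<circ> cs \<phi> \<omega>' (1 + (k-1)) (Suc (n-k))"
      by (subst nsplit) (rule cs_add)
    then show ?thesis using k1 a' b' unfolding \<omega>'_def by simp
  qed
  have La: "\<forall>l\<in>{1..<1+(k-1)}. \<omega> l \<in> I l" using w kn by auto
  have Lb: "\<forall>l\<in>{Suc k..<Suc k+(n-k)}. \<omega> l \<in> I l" using w kn by auto
  have Lw: "\<forall>l\<in>{1..<1+n}. \<omega> l \<in> I l" using w by auto
  have Lw': "\<forall>l\<in>{1..<1+n}. \<omega>' l \<in> I l" using w i' kn unfolding \<omega>'_def by auto
  have DP'pos: "Dnorm X ?p' > 0" using s_Dnorm_pos[OF k1 i'] .
  have pt: "dnorm (cs \<phi> \<omega> 1 n) x \<le> K^2 * Dnorm X ?p * Dnorm X (cs \<phi> \<omega>' 1 n) / Dnorm X ?p'"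
    if x: "x \<in> X" for x
  proof -
    define y where "y = \<beta> x"
    have xV: "x \<in> V" using x XV by auto
    have yX: "y \<in> X" unfolding y_def \<beta>_def using cs_X[OF _ Lb x] by simp
    have yV: "y \<in> V" using yX XV by auto
    obtain cb where cb: "confat \<beta> x cb" using cs_V[OF _ Lb xV] unfolding \<beta>_def by auto
    obtain cp where cp: "confat ?p y cp" and pyV: "?p y \<in> V" using s_conf[OF k1 wk yV] by auto
    obtain cp' where cp': "confat ?p' y cp'" and p'yV: "?p' y \<in> V" using s_conf[OF k1 i' yV] by auto
    obtain ca where ca: "confat \<alpha> (?p y) ca" using cs_V[OF _ La pyV] unfolding \<alpha>_def by auto
    obtain ca' where ca': "confat \<alpha> (?p' y) ca'" using cs_V[OF _ La p'yV] unfolding \<alpha>_def by auto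
    have d1: "dnorm (cs \<phi> \<omega> 1 n) x = dnorm \<alpha> (?p y) * (dnorm ?p y * dnorm \<beta> x)"
      unfolding e1
      using dnorm_comp[OF confat_comp[OF cb, of ?p cp] , of \<alpha> ca] cp ca dnorm_comp[OF cb, of ?p cp]
      unfolding y_def by simp
    have d2: "dnorm (cs \<phi> \<omega>' 1 n) x = dnorm \<alpha> (?p' y) * (dnorm ?p' y * dnorm \<beta> x)"
      unfolding e2
      using dnorm_comp[OF confat_comp[OF cb, of ?p' cp'] , of \<alpha> ca'] cp' ca' dnorm_comp[OF cb, of ?p' cp']
      unfolding y_def by simp
    have a1: "dnorm \<alpha> (?p y) \<le> K * dnorm \<alpha> (?p' y)"
      unfolding \<alpha>_def by (rule dist0[OF _ La pyV p'yV]) simp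
    have a2: "dnorm ?p y \<le> Dnorm X ?p" by (rule s_dnorm_le_Dnorm[OF k1 wk yX])
    have a3: "Dnorm X ?p' \<le> K * dnorm ?p' y" by (rule s_Dnorm_le_K[OF k1 i' yV])
    have a4: "dnorm (cs \<phi> \<omega>' 1 n) x \<le> Dnorm X (cs \<phi> \<omega>' 1 n)"
      by (rule dnorm_le_Dnorm[OF _ Lw' x]) simp
    have p1: "dnorm \<alpha> (?p y) > 0" unfolding \<alpha>_def by (rule dnorm_pos[OF _ La pyV]) simp
    have p1': "dnorm \<alpha> (?p' y) > 0" unfolding \<alpha>_def by (rule dnorm_pos[OF _ La p'yV]) simp
    have p2: "dnorm ?p y > 0" by (rule s_dnorm_pos[OF k1 wk yV])
    have p2': "dnorm ?p' y > 0" by (rule s_dnorm_pos[OF k1 i' yV])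
    have p3: "dnorm \<beta> x > 0" unfolding \<beta>_def by (rule dnorm_pos[OF _ Lb xV]) simp
    have "dnorm (cs \<phi> \<omega> 1 n) x * Dnorm X ?p'
        \<le> (K * dnorm \<alpha> (?p' y)) * (Dnorm X ?p * dnorm \<beta> x) * (K * dnorm ?p' y)"
      unfolding d1 using a1 a2 a3 p1 p1' p2 p2' p3 K1 DP'pos
      by (intro mult_mono mult_right_mono) auto
    also have "\<dots> = K^2 * Dnorm X ?p * dnorm (cs \<phi> \<omega>' 1 n) x"
      unfolding d2 by (simp add: power2_eq_square algebra_simps)
    also have "\<dots> \<le> K^2 * Dnorm X ?p * Dnorm X (cs \<phi> \<omega>' 1 n)"
      using a4 s_Dnorm_pos[OF k1 wk] by (intro mult_left_mono) auto
    finally show ?thesis using DP'pos by (simp add: pos_le_divide_eq)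
  qed
  have "Dnorm X (cs \<phi> \<omega> 1 n) \<le> K^2 * Dnorm X ?p * Dnorm X (cs \<phi> \<omega>' 1 n) / Dnorm X ?p'"
    unfolding Dnorm_def[of X "cs \<phi> \<omega> 1 n"] using Xne pt by (intro cSUP_least) auto
  then show ?thesis using DP'pos unfolding \<omega>'_def by (simp add: pos_le_divide_eq)
qed

end

lemma enn_summable: "(f::'b \<Rightarrow> ennreal) summable_on A"
  by (rule nonneg_summable_on_complete) simp

lemma ennreal_finite_le_infsum:
  fixes f :: "'b \<Rightarrow> ennreal"
  assumes "finite F" "F \<subseteq> A"
  shows "sum f F \<le> infsum f A"
  unfolding nonneg_infsum_complete[of A f, OF zero_le] using assms by (intro SUP_upper) auto

lemma ennreal_infsum_le:
  fixes f :: "'b \<Rightarrow> ennreal"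
  assumes "\<And>F. finite F \<Longrightarrow> F \<subseteq> A \<Longrightarrow> sum f F \<le> c"
  shows "infsum f A \<le> c"
  unfolding nonneg_infsum_complete[of A f, OF zero_le] using assms by (intro SUP_least) auto

locale ncifs_sum = ncifs_data X V I \<phi> K
  for X V :: "'a::euclidean_space set" and I :: "nat \<Rightarrow> nat set"
    and \<phi> :: "nat \<Rightarrow> nat \<Rightarrow> 'a \<Rightarrow> 'a" and K :: real +
  fixes If :: "nat \<Rightarrow> nat set" and t :: real and e :: "nat \<Rightarrow> real"
  assumes t0: "0 \<le> t"
    and Iff: "\<And>j. 1 \<le> j \<Longrightarrow> finite (If j) \<and> If j \<subseteq> I j \<and> If j \<noteq> {}"
    and e: "\<And>k. 1 \<le> k \<Longrightarrow> infsum (\<lambda>i. ennreal (Dnorm X (\<phi> k i) powr t)) (I k - If k) = ennreal (e k)"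
    and e0: "\<And>k. e k \<ge> 0"
begin

definition g :: "nat \<Rightarrow> (nat \<Rightarrow> nat) \<Rightarrow> ennreal" where
  "g n \<omega> = ennreal (Dnorm X (cs \<phi> \<omega> 1 n) powr t)"
definition h :: "nat \<Rightarrow> nat \<Rightarrow> ennreal" where
  "h k i = ennreal (Dnorm X (\<phi> k i) powr t)"
definition J :: "nat \<Rightarrow> nat \<Rightarrow> nat set" where
  "J k j = (if j \<le> k then If j else I j)"
definition Zk :: "nat \<Rightarrow> nat \<Rightarrow> ennreal" where
  "Zk n k = infsum (g n) (PiE {1..n} (J k))"
definition f :: "nat \<Rightarrow> real" where
  "f k = (\<Sum>i\<in>If k. Dnorm X (\<phi> k i) powr t)"
definition Kt :: real where "Kt = (K^2) powr t"
definition r :: "nat \<Rightarrow> real" where "r k = 1 + Kt * e k / f k"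

lemma J_sub: "1 \<le> j \<Longrightarrow> J k j \<subseteq> I j"
  unfolding J_def using Iff by auto

lemma f_pos: "1 \<le> k \<Longrightarrow> f k > 0"
proof -
  assume k: "1 \<le> k"
  have fin: "finite (If k)" and ne: "If k \<noteq> {}" and sub: "If k \<subseteq> I k" using Iff[OF k] by auto
  have "\<And>i. i \<in> If k \<Longrightarrow> Dnorm X (\<phi> k i) powr t > 0"
    using sub s_Dnorm_pos[OF k] by force
  then show "f k > 0" unfolding f_def
    using fin ne by (intro sum_pos) auto
qed

lemma Kt_pos: "Kt > 0" unfolding Kt_def using K1 by simp

lemma r_ge1: "1 \<le> k \<Longrightarrow> r k \<ge> 1"
  unfolding r_def using Kt_pos e0[of k] f_pos[of k] by simp

lemma word_ineq:
  assumes kn: "k \<in> {1..n}" and w: "\<forall>l\<in>{1..n}. \<omega> l \<in> I l" and i': "i' \<in> I k"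
  shows "g n \<omega> * h k i' \<le> ennreal Kt * (h k (\<omega> k) * g n (fun_upd \<omega> k i'))"
proof -
  have k1: "1 \<le> k" using kn by auto
  have wk: "\<omega> k \<in> I k" using kn w by auto
  have w': "\<forall>l\<in>{1..n}. (fun_upd \<omega> k i') l \<in> I l" using w i' by auto
  let ?A = "Dnorm X (cs \<phi> \<omega> 1 n)" and ?B = "Dnorm X (\<phi> k i')"
    and ?C = "Dnorm X (\<phi> k (\<omega> k))" and ?D = "Dnorm X (cs \<phi> (fun_upd \<omega> k i') 1 n)"
  have pA: "?A > 0" using Dnorm_pos[of 1 n \<omega>] w by auto
  have pB: "?B > 0" using s_Dnorm_pos[OF k1 i'] .
  have pC: "?C > 0" using s_Dnorm_pos[OF k1 wk] .
  have pD: "?D > 0" using Dnorm_pos[of 1 n "fun_upd \<omega> k i'"] w' by auto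
  have "(?A * ?B) powr t \<le> (K^2 * ?C * ?D) powr t"
    using key[OF kn w i'] pA pB t0 by (intro powr_mono2) auto
  then have "?A powr t * ?B powr t \<le> Kt * (?C powr t * ?D powr t)"
    unfolding Kt_def using pA pB pC pD K1 by (simp add: powr_mult mult.assoc)
  then have "ennreal (?A powr t * ?B powr t) \<le> ennreal (Kt * (?C powr t * ?D powr t))"
    by (rule ennreal_leI)
  then show ?thesis unfolding g_def h_def using Kt_pos
    by (simp add: ennreal_mult)
qed

lemma step:
  assumes k1: "1 \<le> k" and kn: "k \<le> n"
  shows "Zk n (k-1) \<le> ennreal (r k) * Zk n k"
proof -
  define W0 where "W0 = PiE {1..n} (J (k-1))"
  define W1 where "W1 = PiE {1..n} (J k)"
  define B where "B = {\<omega>\<in>W0. \<omega> k \<notin> If k}"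
  have Jk: "J k k = If k" "J (k-1) k = I k" unfolding J_def using k1 by auto
  have Jo: "\<And>j. j \<noteq> k \<Longrightarrow> J (k-1) j = J k j" unfolding J_def by auto
  have ifs: "If k \<subseteq> I k" using Iff[OF k1] by auto
  have kin: "k \<in> {1..n}" using k1 kn by auto
  have W1eq: "W1 = {\<omega>\<in>W0. \<omega> k \<in> If k}"
  proof (intro set_eqI iffI)
    fix \<omega> assume a: "\<omega> \<in> W1"
    then have ext: "\<omega> \<in> extensional {1..n}" and m: "\<And>x. x \<in> {1..n} \<Longrightarrow> \<omega> x \<in> J k x"
      unfolding W1_def PiE_iff by auto
    have "\<omega> x \<in> J (k-1) x" if "x \<in> {1..n}" for x
    proof (cases "x = k")
      case True then show ?thesis using m[OF that] Jk ifs by auto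
    next
      case False then show ?thesis using m[OF that] Jo by auto
    qed
    then have "\<omega> \<in> W0" unfolding W0_def PiE_iff using ext by auto
    moreover have "\<omega> k \<in> If k" using m[OF kin] Jk by simp
    ultimately show "\<omega> \<in> {\<omega>\<in>W0. \<omega> k \<in> If k}" by simp
  next
    fix \<omega> assume a: "\<omega> \<in> {\<omega>\<in>W0. \<omega> k \<in> If k}"
    then have ext: "\<omega> \<in> extensional {1..n}" and m: "\<And>x. x \<in> {1..n} \<Longrightarrow> \<omega> x \<in> J (k-1) x"
      and wk: "\<omega> k \<in> If k"
      unfolding W0_def PiE_iff by auto
    have "\<omega> x \<in> J k x" if "x \<in> {1..n}" for x
    proof (cases "x = k")
      case True then show ?thesis using wk Jk by auto
    next
      case False then show ?thesis using m[OF that] Jo by auto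
    qed
    then show "\<omega> \<in> W1" unfolding W1_def PiE_iff using ext by auto
  qed
  have W0eq: "W0 = W1 \<union> B" and disj: "W1 \<inter> B = {}" unfolding W1eq B_def by auto
  have Z0: "Zk n (k-1) = infsum (g n) W1 + infsum (g n) B"
    unfolding Zk_def W0_def[symmetric] W0eq by (rule infsum_Un_disjoint[OF enn_summable enn_summable disj])
  have Z1: "Zk n k = infsum (g n) W1" unfolding Zk_def W1_def ..
  have fk: "f k > 0" using f_pos[OF k1] .
  have inB: "\<forall>l\<in>{1..n}. \<omega> l \<in> I l" if "\<omega> \<in> B" for \<omega>
    using that J_sub unfolding B_def W0_def PiE_iff by force
  have upd: "fun_upd \<omega> k i' \<in> W1" if "\<omega> \<in> B" "i' \<in> If k" for \<omega> i'
    using that Jk Jo kin unfolding B_def W0_def W1_def PiE_iff extensional_def by auto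
  have Bsum: "infsum (g n) B \<le> ennreal (Kt * e k / f k) * infsum (g n) W1"
  proof (rule ennreal_infsum_le)
    fix F assume F: "finite F" "F \<subseteq> B"
    define T where "T = (\<lambda>(\<omega>::nat\<Rightarrow>nat, i'::nat). (\<omega> k, fun_upd \<omega> k i'))"
    define P where "P = T ` (F \<times> If k)"
    have finIf: "finite (If k)" using Iff[OF k1] by auto
    have finP: "finite P" unfolding P_def using F finIf by auto
    have injT: "inj_on T (F \<times> If k)"
    proof (rule inj_onI)
      fix p q assume "p \<in> F \<times> If k" "q \<in> F \<times> If k" "T p = T q"
      then obtain w1 a w2 b where pq: "p = (w1, a)" "q = (w2, b)"
        and eq: "w1 k = w2 k" "fun_upd w1 k a = fun_upd w2 k b"
        unfolding T_def by (cases p, cases q) auto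
      have "a = b" using fun_cong[OF eq(2), of k] by simp
      moreover have "w1 = w2"
      proof
        fix x show "w1 x = w2 x" using fun_cong[OF eq(2), of x] eq(1) by (cases "x = k") auto
      qed
      ultimately show "p = q" using pq by simp
    qed
    have P1: "fst ` P \<subseteq> I k - If k" unfolding P_def T_def using F ifs inB kin
      unfolding B_def by auto
    have P2: "snd ` P \<subseteq> W1" unfolding P_def T_def using F upd by auto
    have fsum: "ennreal (f k) = (\<Sum>i'\<in>If k. h k i')"
      unfolding f_def h_def by (rule sum_ennreal[symmetric]) simp
    have "sum (g n) F * ennreal (f k) = (\<Sum>\<omega>\<in>F. \<Sum>i'\<in>If k. g n \<omega> * h k i')"
      unfolding fsum by (simp add: sum_distrib_left sum_distrib_right sum.swap[of _ "If k"])
    also have "\<dots> \<le> (\<Sum>\<omega>\<in>F. \<Sum>i'\<in>If k. ennreal Kt * (h k (\<omega> k) * g n (fun_upd \<omega> k i')))"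
    proof (intro sum_mono)
      fix \<omega> i' assume "\<omega> \<in> F" "i' \<in> If k"
      then show "g n \<omega> * h k i' \<le> ennreal Kt * (h k (\<omega> k) * g n (fun_upd \<omega> k i'))"
        using word_ineq[OF kin inB] F ifs by auto
    qed
    also have "\<dots> = ennreal Kt * (\<Sum>p\<in>F \<times> If k. (\<lambda>(i, w). h k i * g n w) (T p))"
    proof -
      have "(\<Sum>p\<in>F \<times> If k. (\<lambda>(i, w). h k i * g n w) (T p))
          = (\<Sum>(\<omega>, i')\<in>F \<times> If k. h k (\<omega> k) * g n (fun_upd \<omega> k i'))"
        unfolding T_def by (rule sum.cong) auto
      then show ?thesis by (simp add: sum.cartesian_product[symmetric] sum_distrib_left)
    qed
    also have "\<dots> = ennreal Kt * (\<Sum>q\<in>P. (\<lambda>(i, w). h k i * g n w) q)"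
      unfolding P_def using sum.reindex[OF injT, of "\<lambda>(i, w). h k i * g n w"] by simp
    also have "\<dots> \<le> ennreal Kt * (\<Sum>q\<in>fst ` P \<times> snd ` P. (\<lambda>(i, w). h k i * g n w) q)"
      using finP by (intro mult_left_mono sum_mono2) (auto intro: rev_image_eqI)
    also have "\<dots> = ennreal Kt * ((\<Sum>i\<in>fst ` P. h k i) * (\<Sum>w\<in>snd ` P. g n w))"
      by (simp add: sum_product sum.cartesian_product)
    also have "\<dots> \<le> ennreal Kt * (ennreal (e k) * infsum (g n) W1)"
    proof (intro mult_left_mono mult_mono)
      have "(\<Sum>i\<in>fst ` P. h k i) \<le> infsum (h k) (I k - If k)"
        using finP P1 by (intro ennreal_finite_le_infsum) auto
      then show "(\<Sum>i\<in>fst ` P. h k i) \<le> ennreal (e k)" using e[OF k1] unfolding h_def by simp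
      show "(\<Sum>w\<in>snd ` P. g n w) \<le> infsum (g n) W1"
        using finP P2 by (intro ennreal_finite_le_infsum) auto
    qed auto
    finally have main: "sum (g n) F * ennreal (f k) \<le> ennreal Kt * (ennreal (e k) * infsum (g n) W1)" .
    have "sum (g n) F = sum (g n) F * ennreal (f k) * ennreal (1 / f k)"
      using fk by (simp add: mult.assoc ennreal_mult[symmetric])
    also have "\<dots> \<le> ennreal Kt * (ennreal (e k) * infsum (g n) W1) * ennreal (1 / f k)"
      using main by (rule mult_right_mono) simp
    also have "\<dots> = ennreal (Kt * e k / f k) * infsum (g n) W1"
    proof -
      have "Kt * e k / f k = Kt * e k * (1 / f k)" by simp
      moreover have "ennreal (Kt * e k * (1 / f k)) = ennreal (Kt * e k) * ennreal (1 / f k)"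
        using fk Kt_pos e0[of k] by (intro ennreal_mult) auto
      moreover have "ennreal (Kt * e k) = ennreal Kt * ennreal (e k)"
        using Kt_pos e0[of k] by (intro ennreal_mult) auto
      ultimately have q: "ennreal (Kt * e k / f k) = ennreal Kt * ennreal (e k) * ennreal (1 / f k)"
        by simp
      show ?thesis unfolding q by (simp only: ac_simps)
    qed
    finally show "sum (g n) F \<le> ennreal (Kt * e k / f k) * infsum (g n) W1" .
  qed
  have "Zk n (k-1) \<le> infsum (g n) W1 + ennreal (Kt * e k / f k) * infsum (g n) W1"
    unfolding Z0 using Bsum by (rule add_left_mono)
  also have "\<dots> = ennreal (r k) * Zk n k"
    unfolding Z1 r_def using Kt_pos e0[of k] fk
    by (simp add: ennreal_plus[symmetric] distrib_right)
  finally show ?thesis .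
qed

lemma telescope:
  assumes "m \<le> n"
  shows "Zk n 0 \<le> ennreal (\<Prod>k\<in>{1..m}. r k) * Zk n m"
  using assms
proof (induction m)
  case 0
  then show ?case by simp
next
  case (Suc m)
  have "Zk n 0 \<le> ennreal (\<Prod>k\<in>{1..m}. r k) * Zk n m" using Suc by simp
  also have "\<dots> \<le> ennreal (\<Prod>k\<in>{1..m}. r k) * (ennreal (r (Suc m)) * Zk n (Suc m))"
    using step[of "Suc m" n] Suc.prems by (intro mult_left_mono) auto
  also have "\<dots> = ennreal (\<Prod>k\<in>{1..Suc m}. r k) * Zk n (Suc m)"
  proof -
    have "(\<Prod>k\<in>{1..m}. r k) \<ge> 0" using r_ge1 by (intro prod_nonneg) (auto intro: order_trans[OF zero_le_one])
    moreover have "r (Suc m) \<ge> 0" using r_ge1[of "Suc m"] by simp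
    ultimately show ?thesis by (simp add: prod.nat_ivl_Suc' ennreal_mult mult_ac)
  qed
  finally show ?case .
qed

end

lemma ennreal_infsum_real:
  fixes f :: "'b \<Rightarrow> real"
  assumes "f summable_on A" "\<And>x. x \<in> A \<Longrightarrow> f x \<ge> 0"
  shows "infsum (\<lambda>x. ennreal (f x)) A = ennreal (infsum f A)"
proof -
  have "infsum (\<lambda>x. ennreal (f x)) A = (SUP F\<in>{F. finite F \<and> F \<subseteq> A}. sum (\<lambda>x. ennreal (f x)) F)"
    by (rule nonneg_infsum_complete) simp
  also have "\<dots> = (SUP F\<in>{F. finite F \<and> F \<subseteq> A}. ennreal (sum f F))"
    using assms(2) by (intro SUP_cong refl) (auto intro!: sum_ennreal)
  also have "\<dots> = ennreal (infsum f A)" using infsum_nonneg_is_SUPREMUM_ennreal[OF assms] by simp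
  finally show ?thesis .
qed

lemma eln_mono:
  assumes "a \<le> b"
  shows "eln a \<le> eln b"
proof -
  consider "a = 0" | "b = \<infinity>" | "a \<noteq> 0" "b \<noteq> \<infinity>" by blast
  then show ?thesis
  proof cases
    case 1 then show ?thesis unfolding eln_def by simp
  next
    case 2 then show ?thesis unfolding eln_def by simp
  next
    case 3
    then have a: "a \<noteq> \<infinity>" using assms by (metis infinity_ennreal_def top.extremum_uniqueI)
    have b0: "b \<noteq> 0" using 3 assms by (metis le_zero_eq)
    have "enn2real a \<le> enn2real b" using assms 3 by (simp add: enn2real_mono top.not_eq_extremum)
    moreover have "enn2real a > 0" using 3 a by (simp add: enn2real_positive_iff top.not_eq_extremum zero_less_iff_neq_zero)
    ultimately show ?thesis unfolding eln_def using 3 a b0 by simp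
  qed
qed

lemma eln_ennreal: "x > 0 \<Longrightarrow> eln (ennreal x) = ereal (ln x)"
  unfolding eln_def by simp

lemma prod_le_superset:
  fixes r :: "nat \<Rightarrow> real"
  assumes "finite B" "A \<subseteq> B" "\<And>x. x \<in> B \<Longrightarrow> r x \<ge> 1"
  shows "prod r A \<le> prod r B"
proof -
  have "prod r B = prod r A * prod r (B - A)" using prod.subset_diff[OF assms(2,1)] by (simp add: mult.commute)
  moreover have "prod r (B - A) \<ge> 1" using assms(3) by (intro prod_ge_1) auto
  moreover have "prod r A \<ge> 0" using assms by (intro prod_nonneg) (auto intro: order_trans[OF zero_le_one])
  ultimately show ?thesis by (metis mult_left_mono mult.right_neutral)
qed

theorem proposition5p1:
  fixes X :: "'a::euclidean_space set" and I I\<^sub>f :: "nat \<Rightarrow> nat set"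
    and \<phi> :: "nat \<Rightarrow> nat \<Rightarrow> 'a \<Rightarrow> 'a" and K t \<delta> :: real
  assumes "NCIFS X I \<phi> K"
    and "0 \<le> t" and "t \<le> real DIM('a)"
    and "\<forall>n\<ge>1. (\<lambda>j. Dnorm X (\<phi> n j) powr t) summable_on I n"
    and "\<delta> > 0"
    and "\<forall>n\<ge>1. finite (I\<^sub>f n) \<and> I\<^sub>f n \<subseteq> I n \<and> I\<^sub>f n \<noteq> {}"
    and "eventually (\<lambda>n. (\<Sum>\<^sub>\<infinity>j\<in>I n. Dnorm X (\<phi> n j) powr t)
                         \<le> (1 + \<delta>) * (\<Sum>j\<in>I\<^sub>f n. Dnorm X (\<phi> n j) powr t)) sequentially"
  shows "lower_pressure X I\<^sub>f \<phi> t \<ge> lower_pressure X I \<phi> t - ereal (\<delta> * K ^ (2 * DIM('a)))"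
proof -
  have ex: "\<exists>V. open V \<and> connected V \<and> X \<subseteq> V \<and>
        (\<forall>j\<ge>1. \<forall>i\<in>I j. conformal_C1_diffeo V (\<phi> j i)) \<and>
        K \<ge> 1 \<and>
        (\<forall>\<omega> k m x y. 1 \<le> k \<longrightarrow> 1 \<le> m \<longrightarrow> (\<forall>l\<in>{k..<k+m}. \<omega> l \<in> I l) \<longrightarrow>
            x \<in> V \<longrightarrow> y \<in> V \<longrightarrow> dnorm (cs \<phi> \<omega> k m) x \<le> K * dnorm (cs \<phi> \<omega> k m) y)"
    using assms(1) unfolding NCIFS_def by (elim conjE) assumption
  obtain V where V: "open V \<and> connected V \<and> X \<subseteq> V \<and>
        (\<forall>j\<ge>1. \<forall>i\<in>I j. conformal_C1_diffeo V (\<phi> j i)) \<and>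
        K \<ge> 1 \<and>
        (\<forall>\<omega> k m x y. 1 \<le> k \<longrightarrow> 1 \<le> m \<longrightarrow> (\<forall>l\<in>{k..<k+m}. \<omega> l \<in> I l) \<longrightarrow>
            x \<in> V \<longrightarrow> y \<in> V \<longrightarrow> dnorm (cs \<phi> \<omega> k m) x \<le> K * dnorm (cs \<phi> \<omega> k m) y)"
    using ex by (rule exE)
  have XV: "X \<subseteq> V" using V by (elim conjE) assumption
  have cV: "\<forall>j\<ge>1. \<forall>i\<in>I j. conformal_C1_diffeo V (\<phi> j i)" using V by (elim conjE) assumption
  have K1: "K \<ge> 1" using V by (elim conjE) assumption
  have dV: "\<forall>\<omega> k m x y. 1 \<le> k \<longrightarrow> 1 \<le> m \<longrightarrow> (\<forall>l\<in>{k..<k+m}. \<omega> l \<in> I l) \<longrightarrow>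
            x \<in> V \<longrightarrow> y \<in> V \<longrightarrow> dnorm (cs \<phi> \<omega> k m) x \<le> K * dnorm (cs \<phi> \<omega> k m) y"
    using V by (elim conjE) assumption
  have Xne: "X \<noteq> {}" using assms(1) unfolding NCIFS_def by (elim conjE) assumption
  have mX: "\<forall>j\<ge>1. \<forall>i\<in>I j. \<phi> j i ` X \<subseteq> X"
    using assms(1) unfolding NCIFS_def by (elim conjE) assumption
  interpret D: ncifs_data X V I \<phi> K
  proof (rule ncifs_data.intro[OF XV Xne _ _ K1])
    show "\<And>j i. 1 \<le> j \<Longrightarrow> i \<in> I j \<Longrightarrow> \<phi> j i ` X \<subseteq> X" using mX by blast
    show "\<And>j i. 1 \<le> j \<Longrightarrow> i \<in> I j \<Longrightarrow> conformal_C1_diffeo V (\<phi> j i)" using cV by blast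
    show "\<And>\<omega> k m x y. 1 \<le> k \<Longrightarrow> 1 \<le> m \<Longrightarrow> (\<forall>l\<in>{k..<k+m}. \<omega> l \<in> I l) \<Longrightarrow>
            x \<in> V \<Longrightarrow> y \<in> V \<Longrightarrow> dnorm (cs \<phi> \<omega> k m) x \<le> K * dnorm (cs \<phi> \<omega> k m) y"
      using dV by blast
  qed
  define e where "e k = infsum (\<lambda>i. Dnorm X (\<phi> k i) powr t) (I k - I\<^sub>f k)" for k
  have Iff: "\<And>j. 1 \<le> j \<Longrightarrow> finite (I\<^sub>f j) \<and> I\<^sub>f j \<subseteq> I j \<and> I\<^sub>f j \<noteq> {}" using assms(6) by auto
  have summ: "(\<lambda>i. Dnorm X (\<phi> k i) powr t) summable_on (I k - I\<^sub>f k)" if "1 \<le> k" for k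
    using assms(4) that by (meson Diff_subset summable_on_subset_banach)
  have e0: "e k \<ge> 0" for k unfolding e_def by (rule infsum_nonneg) simp
  have enn: "infsum (\<lambda>i. ennreal (Dnorm X (\<phi> k i) powr t)) (I k - I\<^sub>f k) = ennreal (e k)" if "1 \<le> k" for k
    unfolding e_def by (rule ennreal_infsum_real[OF summ[OF that]]) simp
  interpret S: ncifs_sum X V I \<phi> K I\<^sub>f t e
    by unfold_locales (use assms(2) Iff enn e0 in auto)
  have Z0: "S.Zk n 0 = Zn X I \<phi> t n" for n
  proof -
    have "PiE {1..n} (S.J 0) = PiE {1..n} I" by (rule PiE_cong) (auto simp: S.J_def)
    then show ?thesis unfolding S.Zk_def Zn_def words_def S.g_def by simp
  qed
  have Zf: "S.Zk n n = Zn X I\<^sub>f \<phi> t n" for n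
  proof -
    have "PiE {1..n} (S.J n) = PiE {1..n} I\<^sub>f" by (rule PiE_cong) (auto simp: S.J_def)
    then show ?thesis unfolding S.Zk_def Zn_def words_def S.g_def by simp
  qed
  have tel: "Zn X I \<phi> t n \<le> ennreal (\<Prod>k\<in>{1..n}. S.r k) * Zn X I\<^sub>f \<phi> t n" for n
    using S.telescope[of n n] Z0 Zf by simp
  obtain N0 where N0: "\<And>n. n \<ge> N0 \<Longrightarrow> (\<Sum>\<^sub>\<infinity>j\<in>I n. Dnorm X (\<phi> n j) powr t)
                         \<le> (1 + \<delta>) * (\<Sum>j\<in>I\<^sub>f n. Dnorm X (\<phi> n j) powr t)"
    using assms(7) unfolding eventually_sequentially by blast
  define N where "N = max N0 1"
  define q where "q = 1 + S.Kt * \<delta>"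
  have q1: "q \<ge> 1" unfolding q_def using S.Kt_pos assms(5) by simp
  have rq: "S.r k \<le> q" if "k \<ge> N" for k
  proof -
    have k1: "1 \<le> k" and kN0: "k \<ge> N0" using that unfolding N_def by auto
    have fin: "finite (I\<^sub>f k)" and sub: "I\<^sub>f k \<subseteq> I k" using Iff[OF k1] by auto
    have "I k = I\<^sub>f k \<union> (I k - I\<^sub>f k)" using sub by auto
    then have "(\<Sum>\<^sub>\<infinity>j\<in>I k. Dnorm X (\<phi> k j) powr t) = (\<Sum>\<^sub>\<infinity>j\<in>I\<^sub>f k. Dnorm X (\<phi> k j) powr t) + e k"
      unfolding e_def using summ[OF k1] fin
      by (metis (no_types, lifting) Diff_disjoint infsum_Un_disjoint summable_on_finite)
    then have "S.f k + e k \<le> (1 + \<delta>) * S.f k" using N0[OF kN0] fin unfolding S.f_def by simp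
    then have "e k \<le> \<delta> * S.f k" by (simp add: algebra_simps)
    then have "e k / S.f k \<le> \<delta>" using S.f_pos[OF k1] by (simp add: divide_le_eq)
    then have "S.Kt * (e k / S.f k) \<le> S.Kt * \<delta>" using S.Kt_pos by (intro mult_left_mono) auto
    then show ?thesis unfolding S.r_def q_def by simp
  qed
  define C where "C = (\<Prod>k\<in>{1..N}. S.r k)"
  have C1: "C \<ge> 1" unfolding C_def using S.r_ge1 by (intro prod_ge_1) auto
  have prodb: "(\<Prod>k\<in>{1..n}. S.r k) \<le> C * q ^ n" for n
  proof (induction n)
    case 0 then show ?case using C1 by simp
  next
    case (Suc n)
    show ?case
    proof (cases "Suc n \<le> N")
      case True
      have "(\<Prod>k\<in>{1..Suc n}. S.r k) \<le> C" unfolding C_def using True S.r_ge1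
        by (intro prod_le_superset) auto
      also have "\<dots> \<le> C * q ^ Suc n"
      proof -
        have "1 \<le> q ^ Suc n" by (rule one_le_power[OF q1])
        then have "C * 1 \<le> C * q ^ Suc n" using C1 by (intro mult_left_mono) auto
        then show ?thesis by (simp only: mult_1_right)
      qed
      finally show ?thesis .
    next
      case False
      have p0: "(\<Prod>k\<in>{1..n}. S.r k) \<ge> 0" using S.r_ge1
        by (intro prod_nonneg) (auto intro: order_trans[OF zero_le_one])
      have "(\<Prod>k\<in>{1..Suc n}. S.r k) = (\<Prod>k\<in>{1..n}. S.r k) * S.r (Suc n)"
        by (simp add: prod.nat_ivl_Suc')
      also have "\<dots> \<le> (C * q ^ n) * q"
        using Suc.IH rq[of "Suc n"] False p0 C1 q1 S.r_ge1[of "Suc n"]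
        by (intro mult_mono) auto
      finally show ?thesis by (simp add: mult_ac)
    qed
  qed
  define zf where "zf n = (\<Sum>\<omega>\<in>PiE {1..n} I\<^sub>f. Dnorm X (cs \<phi> \<omega> 1 n) powr t)" for n
  have Zfz: "Zn X I\<^sub>f \<phi> t n = ennreal (zf n)" for n
  proof -
    have "finite (PiE {1..n} I\<^sub>f)" using Iff by (intro finite_PiE) auto
    then show ?thesis unfolding Zn_def words_def zf_def by simp
  qed
  have zfpos: "zf n > 0" for n
  proof -
    have fin: "finite (PiE {1..n} I\<^sub>f)" using Iff by (intro finite_PiE) auto
    have ne: "PiE {1..n} I\<^sub>f \<noteq> {}" using Iff by (simp add: PiE_eq_empty_iff)
    have "Dnorm X (cs \<phi> \<omega> 1 n) > 0" if "\<omega> \<in> PiE {1..n} I\<^sub>f" for \<omega>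
    proof (rule D.Dnorm_pos)
      show "\<forall>l\<in>{1..<1 + n}. \<omega> l \<in> I l" using that Iff by (force simp: PiE_iff)
    qed simp
    note dpos = this
    have "Dnorm X (cs \<phi> \<omega> 1 n) powr t > 0" if "\<omega> \<in> PiE {1..n} I\<^sub>f" for \<omega>
      using dpos[OF that] by simp
    then show ?thesis unfolding zf_def using fin ne by (intro sum_pos) auto
  qed
  have q0: "q > 0" using q1 by simp
  have bound: "eln (Zn X I \<phi> t n) \<le> ereal (ln C + real n * ln q + ln (zf n))" for n
  proof -
    have "Zn X I \<phi> t n \<le> ennreal (\<Prod>k\<in>{1..n}. S.r k) * ennreal (zf n)" using tel Zfz by simp
    also have "\<dots> \<le> ennreal (C * q ^ n) * ennreal (zf n)"
      using prodb[of n] by (intro mult_right_mono ennreal_leI) auto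
    also have "\<dots> = ennreal (C * q ^ n * zf n)" using C1 q1 zfpos[of n]
      by (simp add: ennreal_mult)
    finally have "eln (Zn X I \<phi> t n) \<le> eln (ennreal (C * q ^ n * zf n))" by (rule eln_mono)
    also have "\<dots> = ereal (ln (C * q ^ n * zf n))" using C1 q0 zfpos[of n] by (intro eln_ennreal) simp
    also have "ln (C * q ^ n * zf n) = ln C + real n * ln q + ln (zf n)"
      using C1 q0 zfpos[of n] by (simp add: ln_mult ln_realpow)
    finally show ?thesis .
  qed
  define c where "c = \<delta> * K ^ (2 * DIM('a))"
  have lnq: "ln q < c"
  proof -
    have "S.Kt \<le> (K^2) powr real DIM('a)" unfolding S.Kt_def using K1 assms(3)
      by (intro powr_mono) (auto simp: one_le_power)
    also have "\<dots> = K ^ (2 * DIM('a))" using K1 by (simp add: powr_realpow power_mult)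
    finally have "S.Kt * \<delta> \<le> c" unfolding c_def using assms(5) by (simp add: mult.commute)
    moreover have "ln q < S.Kt * \<delta>" unfolding q_def using S.Kt_pos assms(5)
      by (intro ln_add_one_self_less_self) simp
    ultimately show ?thesis by simp
  qed
  have ev1: "eventually (\<lambda>n. ln C / real n < c - ln q) sequentially"
    using lim_const_over_n[of "ln C"] lnq by (intro order_tendstoD(2)) auto
  have ev: "eventually (\<lambda>n. eln (Zn X I \<phi> t n) / ereal (real n)
              \<le> eln (Zn X I\<^sub>f \<phi> t n) / ereal (real n) + ereal c) sequentially"
    using ev1 eventually_ge_at_top[of "1::nat"]
  proof eventually_elim
    case (elim n)
    have n0: "real n > 0" using elim(2) by simp
    have "eln (Zn X I \<phi> t n) / ereal (real n) \<le> ereal (ln C + real n * ln q + ln (zf n)) / ereal (real n)"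
      by (rule ereal_divide_right_mono[OF bound[of n]]) (use n0 in simp)
    also have "\<dots> = ereal ((ln C + real n * ln q + ln (zf n)) / real n)"
      using n0 by simp
    also have "(ln C + real n * ln q + ln (zf n)) / real n = ln C / real n + ln q + ln (zf n) / real n"
      using n0 by (simp add: field_simps)
    also have "\<dots> \<le> ereal (ln (zf n) / real n + c)" using elim(1) by simp
    also have "\<dots> = eln (Zn X I\<^sub>f \<phi> t n) / ereal (real n) + ereal c"
      using Zfz[of n] zfpos[of n] n0 by (simp add: eln_ennreal)
    finally show ?case .
  qed
  have "lower_pressure X I \<phi> t \<le> liminf (\<lambda>n. eln (Zn X I\<^sub>f \<phi> t n) / ereal (real n) + ereal c)"
    unfolding lower_pressure_def by (rule Liminf_mono[OF ev])
  also have "\<dots> = lower_pressure X I\<^sub>f \<phi> t + ereal c"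
    unfolding lower_pressure_def by (rule Liminf_add_ereal_right) auto
  finally show ?thesis unfolding c_def[symmetric] by (simp add: ereal_minus_le)
qed

end
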